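(* Let $M$ be a tabular MDP with finite $\mathcal S,\mathcal A$, transition model $P$, and reward $r(\cdot;\theta^* )$ with $|r(s,a;\theta^* )|\le R_{\max}$. Let $\gamma^*,\tilde\gamma\in(0,1)$ be two discount factors, and let $Q^*,\tilde Q$ be the fixed points of the soft Bellman update using discount $\gamma^*$ and $\tilde\gamma$ respectively, with policies $\pi^*(a\mid s;\theta^* )\propto\exp(Q^*(s,a;\theta^* ))$ and $\tilde\pi(a\mid s;\theta^* )\propto\exp(\tilde Q(s,a;\theta^* ))$. Then $$\mathbb E_{s\sim w^*}\big[D_{\mathrm{KL}}(\pi^*(\cdot\mid s;\theta^* )\,\|\,\tilde\pi(\cdot\mid s;\theta^* ))\big]\le\frac{2|\mathcal A|R_{\max}}{(1-\tilde\gamma)(1-\gamma^* )}\,|\tilde\gamma-\gamma^*| .$$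
   Context: The soft Bellman update with transition model $P$ and discount $\gamma$ is $Q(s,a;\theta)=r(s,a;\theta)+\gamma\sum_{s'}P(s'\mid s,a)V(s';\theta)$, $V(s;\theta)=\log\sum_{a\in\mathcal A}\exp(Q(s,a;\theta))$. $w^*$ is the discounted stationary state distribution of $\pi^*$ (under the true MDP). *)

theory Defs
  imports Complex_Main
begin

text \<open>Tabular MDP with finite state type 's and finite action type 'a.
  Transition model P s a s' = P(s' | s, a); reward r s a = r(s,a;theta*).\<close>

definition soft_V :: "('s \<Rightarrow> 'a::finite \<Rightarrow> real) \<Rightarrow> 's \<Rightarrow> real" where
  "soft_V Q s = ln (\<Sum>a\<in>UNIV. exp (Q s a))"

definition soft_bellman ::
  "('s \<Rightarrow> 'a::finite \<Rightarrow> real) \<Rightarrow> ('s::finite \<Rightarrow> 'a \<Rightarrow> 's \<Rightarrow> real) \<Rightarrow> real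
   \<Rightarrow> ('s \<Rightarrow> 'a \<Rightarrow> real) \<Rightarrow> 's \<Rightarrow> 'a \<Rightarrow> real" where
  "soft_bellman r P \<gamma> Q s a = r s a + \<gamma> * (\<Sum>s'\<in>UNIV. P s a s' * soft_V Q s')"

definition softmax_policy :: "('s \<Rightarrow> 'a::finite \<Rightarrow> real) \<Rightarrow> 's \<Rightarrow> 'a \<Rightarrow> real" where
  "softmax_policy Q s a = exp (Q s a) / (\<Sum>b\<in>UNIV. exp (Q s b))"

definition is_stoch_kernel :: "('s::finite \<Rightarrow> 'a::finite \<Rightarrow> 's \<Rightarrow> real) \<Rightarrow> bool" where
  "is_stoch_kernel P \<longleftrightarrow> (\<forall>s a s'. 0 \<le> P s a s') \<and> (\<forall>s a. (\<Sum>s'\<in>UNIV. P s a s') = 1)"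

definition is_distribution :: "('s::finite \<Rightarrow> real) \<Rightarrow> bool" where
  "is_distribution \<rho> \<longleftrightarrow> (\<forall>s. 0 \<le> \<rho> s) \<and> (\<Sum>s\<in>UNIV. \<rho> s) = 1"

fun state_occ :: "('s::finite \<Rightarrow> real) \<Rightarrow> ('s \<Rightarrow> 'a::finite \<Rightarrow> real)
    \<Rightarrow> ('s \<Rightarrow> 'a \<Rightarrow> 's \<Rightarrow> real) \<Rightarrow> nat \<Rightarrow> 's \<Rightarrow> real" where
  "state_occ \<rho> \<pi> P 0 s' = \<rho> s'"
| "state_occ \<rho> \<pi> P (Suc t) s' =
     (\<Sum>s\<in>UNIV. state_occ \<rho> \<pi> P t s * (\<Sum>a\<in>UNIV. \<pi> s a * P s a s'))"

definition disc_state_dist :: "real \<Rightarrow> ('s::finite \<Rightarrow> real) \<Rightarrow> ('s \<Rightarrow> 'a::finite \<Rightarrow> real)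
    \<Rightarrow> ('s \<Rightarrow> 'a \<Rightarrow> 's \<Rightarrow> real) \<Rightarrow> 's \<Rightarrow> real" where
  "disc_state_dist \<gamma> \<rho> \<pi> P s = (1 - \<gamma>) * (\<Sum>t. \<gamma> ^ t * state_occ \<rho> \<pi> P t s)"

definition KL_div :: "('a::finite \<Rightarrow> real) \<Rightarrow> ('a \<Rightarrow> real) \<Rightarrow> real" where
  "KL_div p q = (\<Sum>a\<in>UNIV. p a * ln (p a / q a))"

end

theory Submission
  imports Defs
begin


lemma lse_mono_diff:
  fixes x y :: "'a::finite \<Rightarrow> real"
  assumes "\<And>a. x a \<le> y a + E"
  shows "ln (\<Sum>a\<in>UNIV. exp (x a)) \<le> ln (\<Sum>a\<in>UNIV. exp (y a)) + E"
proof -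
  have pos: "0 < (\<Sum>a\<in>UNIV. exp (y a))"
    by (rule sum_pos) auto
  have "(\<Sum>a\<in>UNIV. exp (x a)) \<le> (\<Sum>a\<in>UNIV. exp (y a + E))"
    by (rule sum_mono) (use assms in auto)
  also have "\<dots> = exp E * (\<Sum>a\<in>UNIV. exp (y a))"
    by (simp add: exp_add sum_distrib_left mult.commute)
  finally have le: "(\<Sum>a\<in>UNIV. exp (x a)) \<le> exp E * (\<Sum>a\<in>UNIV. exp (y a))" .
  have pos2: "0 < (\<Sum>a\<in>UNIV. exp (x a))"
    by (rule sum_pos) auto
  have "ln (\<Sum>a\<in>UNIV. exp (x a)) \<le> ln (exp E * (\<Sum>a\<in>UNIV. exp (y a)))"
    using le pos2 by simp
  also have "\<dots> = E + ln (\<Sum>a\<in>UNIV. exp (y a))"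
    using pos by (simp add: ln_mult)
  finally show ?thesis by simp
qed

lemma lse_const:
  "ln (\<Sum>a\<in>(UNIV::'a::finite set). exp B) = B + ln (real (card (UNIV::'a set)))"
proof -
  have "card (UNIV::'a set) > 0" by (simp add: card_gt_0_iff)
  then show ?thesis by (simp add: ln_mult)
qed

lemma lse_abs_bound:
  fixes x :: "'a::finite \<Rightarrow> real"
  assumes "\<And>a. \<bar>x a\<bar> \<le> B"
  shows "\<bar>ln (\<Sum>a\<in>UNIV. exp (x a)) - ln (real (card (UNIV::'a set)))\<bar> \<le> B"
proof -
  have "ln (\<Sum>a\<in>UNIV. exp (x a)) \<le> ln (\<Sum>a\<in>(UNIV::'a set). exp ((\<lambda>_. 0) a)) + B"
    by (rule lse_mono_diff) (smt (verit) assms)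
  moreover have "ln (\<Sum>a\<in>(UNIV::'a set). exp ((\<lambda>_. (0::real)) a)) \<le> ln (\<Sum>a\<in>UNIV. exp (x a)) + B"
    by (rule lse_mono_diff) (smt (verit) assms)
  ultimately show ?thesis using lse_const[where B=0 and 'a='a] by (auto simp: abs_le_iff)
qed

lemma lse_diff_bound:
  fixes x y :: "'a::finite \<Rightarrow> real"
  assumes "\<And>a. \<bar>x a - y a\<bar> \<le> B"
  shows "\<bar>ln (\<Sum>a\<in>UNIV. exp (x a)) - ln (\<Sum>a\<in>UNIV. exp (y a))\<bar> \<le> B"
proof -
  have "ln (\<Sum>a\<in>UNIV. exp (x a)) \<le> ln (\<Sum>a\<in>UNIV. exp (y a)) + B"
    by (rule lse_mono_diff) (smt (verit) assms)
  moreover have "ln (\<Sum>a\<in>UNIV. exp (y a)) \<le> ln (\<Sum>a\<in>UNIV. exp (x a)) + B"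
    by (rule lse_mono_diff) (smt (verit) assms)
  ultimately show ?thesis by (auto simp: abs_le_iff)
qed

lemma kernel_avg_bound:
  assumes P: "is_stoch_kernel P" and f: "\<And>s'. \<bar>f s'\<bar> \<le> M"
  shows "\<bar>\<Sum>s'\<in>UNIV. P s a s' * f s'\<bar> \<le> M"
proof -
  have "\<bar>\<Sum>s'\<in>UNIV. P s a s' * f s'\<bar> \<le> (\<Sum>s'\<in>UNIV. \<bar>P s a s' * f s'\<bar>)"
    by (rule sum_abs)
  also have "\<dots> \<le> (\<Sum>s'\<in>UNIV. P s a s' * M)"
    by (rule sum_mono) (use P f in \<open>auto simp: is_stoch_kernel_def abs_mult intro: mult_left_mono\<close>)
  also have "\<dots> = M" using P by (simp add: is_stoch_kernel_def flip: sum_distrib_right)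
  finally show ?thesis .
qed

lemma KL_bound:
  fixes x y :: "'a::finite \<Rightarrow> real"
  assumes "\<And>a. \<bar>x a - y a - K\<bar> \<le> E"
  shows "KL_div (\<lambda>a. exp (x a) / (\<Sum>b\<in>UNIV. exp (x b))) (\<lambda>a. exp (y a) / (\<Sum>b\<in>UNIV. exp (y b))) \<le> 2 * E"
proof -
  define Sx where "Sx = (\<Sum>b\<in>UNIV. exp (x b))"
  define Sy where "Sy = (\<Sum>b\<in>UNIV. exp (y b))"
  have Sx: "Sx > 0" unfolding Sx_def by (rule sum_pos) auto
  have Sy: "Sy > 0" unfolding Sy_def by (rule sum_pos) auto
  have lnS: "ln Sy \<le> ln Sx + (E - K)"
    unfolding Sx_def Sy_def
    by (rule lse_mono_diff) (smt (verit) assms)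
  have each: "ln ((exp (x a) / Sx) / (exp (y a) / Sy)) \<le> 2 * E" for a
  proof -
    have "(exp (x a) / Sx) / (exp (y a) / Sy) = exp (x a - y a) * (Sy / Sx)"
      using Sx Sy by (simp add: exp_diff field_simps)
    hence "ln ((exp (x a) / Sx) / (exp (y a) / Sy)) = (x a - y a) + ln Sy - ln Sx"
      using Sx Sy by (simp add: ln_mult ln_div)
    thus ?thesis using lnS assms[of a] by (auto simp: abs_le_iff)
  qed
  have "KL_div (\<lambda>a. exp (x a) / Sx) (\<lambda>a. exp (y a) / Sy)
        \<le> (\<Sum>a\<in>UNIV. exp (x a) / Sx * (2 * E))"
    unfolding KL_div_def
    by (rule sum_mono, rule mult_left_mono) (use each Sx in auto)
  also have "\<dots> = 2 * E"
    using Sx by (simp add: Sx_def flip: sum_distrib_right sum_divide_distrib)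
  finally show ?thesis by (simp add: Sx_def Sy_def)
qed



lemma fix_decomp:
  fixes Q :: "'s::finite \<Rightarrow> 'a::finite \<Rightarrow> real"
  assumes P: "is_stoch_kernel P" and g: "\<gamma> < 1"
    and hfix: "soft_bellman r P \<gamma> Q = Q"
  defines "c \<equiv> ln (real (card (UNIV::'a set))) / (1 - \<gamma>)"
  defines "W \<equiv> \<lambda>s. soft_V Q s - c"
  shows "Q s a = r s a + \<gamma> * (\<Sum>s'\<in>UNIV. P s a s' * W s') + \<gamma> * c"
    and "W s = ln (\<Sum>a\<in>UNIV. exp (r s a + \<gamma> * (\<Sum>s'\<in>UNIV. P s a s' * W s'))) - ln (real (card (UNIV::'a set)))"
proof -
  have Qeq: "Q s a = r s a + \<gamma> * (\<Sum>s'\<in>UNIV. P s a s' * W s') + \<gamma> * c" for s a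
  proof -
    have "Q s a = r s a + \<gamma> * (\<Sum>s'\<in>UNIV. P s a s' * soft_V Q s')"
      using fun_cong[OF fun_cong[OF hfix, of s], of a] by (simp add: soft_bellman_def)
    also have "(\<Sum>s'\<in>UNIV. P s a s' * soft_V Q s') = (\<Sum>s'\<in>UNIV. P s a s' * W s' + P s a s' * c)"
      by (simp add: W_def algebra_simps)
    also have "\<dots> = (\<Sum>s'\<in>UNIV. P s a s' * W s') + c"
      using P by (simp add: sum.distrib is_stoch_kernel_def flip: sum_distrib_right)
    finally show ?thesis by (simp add: algebra_simps)
  qed
  thus "Q s a = r s a + \<gamma> * (\<Sum>s'\<in>UNIV. P s a s' * W s') + \<gamma> * c" .
  define T where "T = (\<lambda>a. r s a + \<gamma> * (\<Sum>s'\<in>UNIV. P s a s' * W s'))"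
  have pos: "0 < (\<Sum>a\<in>UNIV. exp (T a))" by (rule sum_pos) auto
  have "soft_V Q s = ln (\<Sum>a\<in>UNIV. exp (T a + \<gamma> * c))"
    unfolding soft_V_def T_def using Qeq by simp
  also have "\<dots> = ln (exp (\<gamma> * c) * (\<Sum>a\<in>UNIV. exp (T a)))"
    by (simp add: exp_add sum_distrib_left mult.commute)
  also have "\<dots> = \<gamma> * c + ln (\<Sum>a\<in>UNIV. exp (T a))"
    using pos by (simp add: ln_mult)
  finally have "W s = ln (\<Sum>a\<in>UNIV. exp (T a)) - (1 - \<gamma>) * c"
    by (simp add: W_def algebra_simps)
  moreover have "(1 - \<gamma>) * c = ln (real (card (UNIV::'a set)))"
    using g by (simp add: c_def)
  ultimately show "W s = ln (\<Sum>a\<in>UNIV. exp (r s a + \<gamma> * (\<Sum>s'\<in>UNIV. P s a s' * W s'))) - ln (real (card (UNIV::'a set)))"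
    by (simp add: T_def)
qed

lemma softmax_nonneg: "0 \<le> softmax_policy Q s a"
  unfolding softmax_policy_def by (intro divide_nonneg_nonneg sum_nonneg) auto

lemma softmax_sum: "(\<Sum>a\<in>UNIV. softmax_policy Q s a) = 1"
proof -
  have "0 < (\<Sum>b\<in>UNIV. exp (Q s b))" by (rule sum_pos) auto
  thus ?thesis unfolding softmax_policy_def by (simp flip: sum_divide_distrib)
qed

lemma occ_props:
  fixes \<pi> :: "'s::finite \<Rightarrow> 'a::finite \<Rightarrow> real"
  assumes P: "is_stoch_kernel P" and rho: "is_distribution \<rho>"
    and pi0: "\<And>s a. 0 \<le> \<pi> s a" and pi1: "\<And>s. (\<Sum>a\<in>UNIV. \<pi> s a) = 1"
  shows "(\<forall>s. 0 \<le> state_occ \<rho> \<pi> P t s) \<and> (\<Sum>s\<in>UNIV. state_occ \<rho> \<pi> P t s) = 1"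
proof (induction t)
  case 0
  then show ?case using rho by (simp add: is_distribution_def)
next
  case (Suc t)
  have nn: "0 \<le> state_occ \<rho> \<pi> P (Suc t) s" for s
    using Suc P pi0 by (auto simp: is_stoch_kernel_def intro!: sum_nonneg mult_nonneg_nonneg)
  have "(\<Sum>s'\<in>UNIV. state_occ \<rho> \<pi> P (Suc t) s')
      = (\<Sum>s\<in>UNIV. state_occ \<rho> \<pi> P t s * (\<Sum>a\<in>UNIV. \<pi> s a * (\<Sum>s'\<in>UNIV. P s a s')))"
  proof -
    have "(\<Sum>s'\<in>UNIV. state_occ \<rho> \<pi> P (Suc t) s')
        = (\<Sum>s'\<in>UNIV. \<Sum>s\<in>UNIV. \<Sum>a\<in>UNIV. state_occ \<rho> \<pi> P t s * \<pi> s a * P s a s')"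
      by (simp add: sum_distrib_left mult.assoc)
    also have "\<dots> = (\<Sum>s\<in>UNIV. \<Sum>s'\<in>UNIV. \<Sum>a\<in>UNIV. state_occ \<rho> \<pi> P t s * \<pi> s a * P s a s')"
      by (rule sum.swap)
    also have "\<dots> = (\<Sum>s\<in>UNIV. \<Sum>a\<in>UNIV. \<Sum>s'\<in>UNIV. state_occ \<rho> \<pi> P t s * \<pi> s a * P s a s')"
      by (rule sum.cong[OF refl], rule sum.swap)
    also have "\<dots> = (\<Sum>s\<in>UNIV. state_occ \<rho> \<pi> P t s * (\<Sum>a\<in>UNIV. \<pi> s a * (\<Sum>s'\<in>UNIV. P s a s')))"
      by (simp add: sum_distrib_left mult.assoc)
    finally show ?thesis .
  qed
  also have "\<dots> = (\<Sum>s\<in>UNIV. state_occ \<rho> \<pi> P t s)"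
    using P pi1 by (simp add: is_stoch_kernel_def)
  finally show ?case using nn Suc by simp
qed

lemma disc_props:
  fixes \<pi> :: "'s::finite \<Rightarrow> 'a::finite \<Rightarrow> real"
  assumes P: "is_stoch_kernel P" and rho: "is_distribution \<rho>"
    and pi0: "\<And>s a. 0 \<le> \<pi> s a" and pi1: "\<And>s. (\<Sum>a\<in>UNIV. \<pi> s a) = 1"
    and g: "0 < \<gamma>" "\<gamma> < 1"
  shows "\<And>s. 0 \<le> disc_state_dist \<gamma> \<rho> \<pi> P s" "(\<Sum>s\<in>UNIV. disc_state_dist \<gamma> \<rho> \<pi> P s) = 1"
proof -
  note occ = occ_props[OF P rho pi0 pi1]
  have le1: "state_occ \<rho> \<pi> P t s \<le> 1" for t s
  proof -
    have "state_occ \<rho> \<pi> P t s \<le> (\<Sum>s\<in>UNIV. state_occ \<rho> \<pi> P t s)"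
      by (rule member_le_sum) (use occ in auto)
    thus ?thesis using occ by simp
  qed
  have summ: "summable (\<lambda>t. \<gamma> ^ t * state_occ \<rho> \<pi> P t s)" for s
  proof (rule summable_comparison_test[OF _ summable_geometric[of \<gamma>]])
    show "\<exists>N. \<forall>n\<ge>N. norm (\<gamma> ^ n * state_occ \<rho> \<pi> P n s) \<le> \<gamma> ^ n"
      using occ le1 g by (auto intro!: exI[of _ 0] mult_left_le simp: abs_mult)
  qed (use g in auto)
  show "0 \<le> disc_state_dist \<gamma> \<rho> \<pi> P s" for s
    unfolding disc_state_dist_def using g occ summ
    by (auto intro!: mult_nonneg_nonneg suminf_nonneg)
  have "(\<Sum>s\<in>UNIV. disc_state_dist \<gamma> \<rho> \<pi> P s) = (1 - \<gamma>) * (\<Sum>s\<in>UNIV. \<Sum>t. \<gamma> ^ t * state_occ \<rho> \<pi> P t s)"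
    by (simp add: disc_state_dist_def sum_distrib_left)
  also have "(\<Sum>s\<in>UNIV. \<Sum>t. \<gamma> ^ t * state_occ \<rho> \<pi> P t s) = (\<Sum>t. \<Sum>s\<in>UNIV. \<gamma> ^ t * state_occ \<rho> \<pi> P t s)"
    by (rule suminf_sum[symmetric]) (use summ in auto)
  also have "\<dots> = (\<Sum>t. \<gamma> ^ t)"
    using occ by (simp flip: sum_distrib_left)
  also have "\<dots> = 1 / (1 - \<gamma>)" using g by (simp add: suminf_geometric)
  finally show "(\<Sum>s\<in>UNIV. disc_state_dist \<gamma> \<rho> \<pi> P s) = 1" using g by simp
qed



theorem corollary2:
  fixes P :: "'s::finite \<Rightarrow> 'a::finite \<Rightarrow> 's \<Rightarrow> real"
    and r :: "'s \<Rightarrow> 'a \<Rightarrow> real"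
    and \<rho>0 :: "'s \<Rightarrow> real"
    and Rmax \<gamma>s \<gamma>t :: real
    and Qs Qt :: "'s \<Rightarrow> 'a \<Rightarrow> real"
  assumes P: "is_stoch_kernel P"
    and rho0: "is_distribution \<rho>0"
    and rbound: "\<And>s a. \<bar>r s a\<bar> \<le> Rmax"
    and gs: "0 < \<gamma>s" "\<gamma>s < 1"
    and gt: "0 < \<gamma>t" "\<gamma>t < 1"
    and Qs_fix: "soft_bellman r P \<gamma>s Qs = Qs"
    and Qt_fix: "soft_bellman r P \<gamma>t Qt = Qt"
  shows "(\<Sum>s\<in>UNIV. disc_state_dist \<gamma>s \<rho>0 (softmax_policy Qs) P s
            * KL_div (softmax_policy Qs s) (softmax_policy Qt s))
         \<le> 2 * real (card (UNIV :: 'a set)) * Rmax / ((1 - \<gamma>t) * (1 - \<gamma>s)) * \<bar>\<gamma>t - \<gamma>s\<bar>"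
proof -
  define n where "n = real (card (UNIV :: 'a set))"
  have n1: "n \<ge> 1" unfolding n_def
    using card_gt_0_iff[of "UNIV::'a set"] by simp
  have R0: "Rmax \<ge> 0" using rbound[of undefined undefined] by linarith
  define cs where "cs = ln n / (1 - \<gamma>s)"
  define ct where "ct = ln n / (1 - \<gamma>t)"
  define Ws where "Ws = (\<lambda>s. soft_V Qs s - cs)"
  define Wt where "Wt = (\<lambda>s. soft_V Qt s - ct)"
  note ds0 = fix_decomp[OF P gs(2) Qs_fix, folded n_def, folded cs_def]
  note dt0 = fix_decomp[OF P gt(2) Qt_fix, folded n_def, folded ct_def]
  have ds1: "Qs s a = r s a + \<gamma>s * (\<Sum>s'\<in>UNIV. P s a s' * Ws s') + \<gamma>s * cs" for s a
    using ds0(1) unfolding Ws_def .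
  have ds2: "Ws s = ln (\<Sum>a\<in>UNIV. exp (r s a + \<gamma>s * (\<Sum>s'\<in>UNIV. P s a s' * Ws s'))) - ln n" for s
    using ds0(2) unfolding Ws_def .
  have dt1: "Qt s a = r s a + \<gamma>t * (\<Sum>s'\<in>UNIV. P s a s' * Wt s') + \<gamma>t * ct" for s a
    using dt0(1) unfolding Wt_def .
  have dt2: "Wt s = ln (\<Sum>a\<in>UNIV. exp (r s a + \<gamma>t * (\<Sum>s'\<in>UNIV. P s a s' * Wt s'))) - ln n" for s
    using dt0(2) unfolding Wt_def .
  note ds = ds1 ds2
  note dt = dt1 dt2
  define Ts where "Ts = (\<lambda>s a. r s a + \<gamma>s * (\<Sum>s'\<in>UNIV. P s a s' * Ws s'))"
  define Tt where "Tt = (\<lambda>s a. r s a + \<gamma>t * (\<Sum>s'\<in>UNIV. P s a s' * Wt s'))"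
  have WsT: "Ws s = ln (\<Sum>a\<in>UNIV. exp (Ts s a)) - ln n" for s
    unfolding Ts_def by (rule ds2)
  have WtT: "Wt s = ln (\<Sum>a\<in>UNIV. exp (Tt s a)) - ln n" for s
    unfolding Tt_def by (rule dt2)
  have Wbound: "\<And>s. \<bar>W s\<bar> \<le> Rmax / (1 - \<gamma>)"
    if W: "\<And>s. W s = ln (\<Sum>a\<in>UNIV. exp (r s a + \<gamma> * (\<Sum>s'\<in>UNIV. P s a s' * W s'))) - ln n"
      and g: "0 < \<gamma>" "\<gamma> < 1"
    for W :: "'s \<Rightarrow> real" and \<gamma> :: real
  proof -
    define M where "M = Max (range (\<lambda>s. \<bar>W s\<bar>))"
    have Mge: "\<bar>W s\<bar> \<le> M" for s unfolding M_def by (rule Max_ge) auto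
    have "M \<in> range (\<lambda>s. \<bar>W s\<bar>)" unfolding M_def by (rule Max_in) auto
    then obtain s0 where s0: "\<bar>W s0\<bar> = M" by auto
    have "\<bar>r s0 a + \<gamma> * (\<Sum>s'\<in>UNIV. P s0 a s' * W s')\<bar> \<le> Rmax + \<gamma> * M" for a
    proof -
      have "\<bar>\<Sum>s'\<in>UNIV. P s0 a s' * W s'\<bar> \<le> M" by (rule kernel_avg_bound[OF P Mge])
      hence "\<bar>\<gamma> * (\<Sum>s'\<in>UNIV. P s0 a s' * W s')\<bar> \<le> \<gamma> * M"
        using g by (simp add: abs_mult mult_left_mono)
      thus ?thesis using rbound[of s0 a] by linarith
    qed
    hence "\<bar>ln (\<Sum>a\<in>UNIV. exp (r s0 a + \<gamma> * (\<Sum>s'\<in>UNIV. P s0 a s' * W s'))) - ln n\<bar> \<le> Rmax + \<gamma> * M"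
      unfolding n_def by (rule lse_abs_bound)
    hence "\<bar>W s0\<bar> \<le> Rmax + \<gamma> * M"
      by (subst W)
    hence "M * (1 - \<gamma>) \<le> Rmax" using s0 by (simp add: algebra_simps)
    hence "M \<le> Rmax / (1 - \<gamma>)" using g by (simp add: field_simps)
    thus "\<bar>W s\<bar> \<le> Rmax / (1 - \<gamma>)" for s using Mge[of s] by linarith
  qed
  have Wtb: "\<bar>Wt s\<bar> \<le> Rmax / (1 - \<gamma>t)" for s
    by (rule Wbound[OF dt(2) gt])
  define Mt where "Mt = Rmax / (1 - \<gamma>t)"
  define \<Delta> where "\<Delta> = \<bar>\<gamma>t - \<gamma>s\<bar>"
  define D where "D = Max (range (\<lambda>s. \<bar>Ws s - Wt s\<bar>))"
  have Dge: "\<bar>Ws s - Wt s\<bar> \<le> D" for s unfolding D_def by (rule Max_ge) auto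
  have "D \<in> range (\<lambda>s. \<bar>Ws s - Wt s\<bar>)" unfolding D_def by (rule Max_in) auto
  then obtain s0 where s0: "\<bar>Ws s0 - Wt s0\<bar> = D" by auto
  have mix: "\<bar>\<gamma>s * Ws s - \<gamma>t * Wt s\<bar> \<le> \<gamma>s * D + \<Delta> * Mt" for s
  proof -
    have "\<gamma>s * Ws s - \<gamma>t * Wt s = \<gamma>s * (Ws s - Wt s) + (\<gamma>s - \<gamma>t) * Wt s"
      by (simp add: algebra_simps)
    moreover have "\<bar>\<gamma>s * (Ws s - Wt s)\<bar> \<le> \<gamma>s * D"
      using gs Dge[of s] by (simp add: abs_mult mult_left_mono)
    moreover have "\<bar>(\<gamma>s - \<gamma>t) * Wt s\<bar> \<le> \<Delta> * Mt"
      unfolding abs_mult \<Delta>_def Mt_def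
      by (rule mult_mono) (use Wtb[of s] in auto)
    ultimately show ?thesis by (smt (verit))
  qed
  have TT: "\<bar>Ts s a - Tt s a\<bar> \<le> \<gamma>s * D + \<Delta> * Mt" for s a
  proof -
    have "Ts s a - Tt s a = (\<Sum>s'\<in>UNIV. P s a s' * (\<gamma>s * Ws s' - \<gamma>t * Wt s'))"
    proof -
      have "Ts s a - Tt s a = (\<Sum>s'\<in>UNIV. \<gamma>s * (P s a s' * Ws s')) - (\<Sum>s'\<in>UNIV. \<gamma>t * (P s a s' * Wt s'))"
        by (simp add: Ts_def Tt_def sum_distrib_left)
      also have "\<dots> = (\<Sum>s'\<in>UNIV. \<gamma>s * (P s a s' * Ws s') - \<gamma>t * (P s a s' * Wt s'))"
        by (rule sum_subtractf[symmetric])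
      also have "\<dots> = (\<Sum>s'\<in>UNIV. P s a s' * (\<gamma>s * Ws s' - \<gamma>t * Wt s'))"
        by (rule sum.cong) (auto simp: right_diff_distrib)
      finally show ?thesis .
    qed
    thus ?thesis using kernel_avg_bound[OF P mix] by simp
  qed
  have "D \<le> \<gamma>s * D + \<Delta> * Mt"
    using s0 lse_diff_bound[of "Ts s0" "Tt s0", OF TT] WsT[of s0] WtT[of s0] by simp
  hence "D * (1 - \<gamma>s) \<le> \<Delta> * Mt" by (simp add: algebra_simps)
  hence Dle: "D \<le> \<Delta> * Mt / (1 - \<gamma>s)" using gs by (simp add: field_simps)
  define E where "E = \<gamma>s * D + \<Delta> * Mt"
  have "E \<le> \<gamma>s * (\<Delta> * Mt / (1 - \<gamma>s)) + \<Delta> * Mt"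
    unfolding E_def using mult_left_mono[OF Dle, of \<gamma>s] gs by simp
  also have "\<dots> = \<Delta> * Mt / (1 - \<gamma>s)" using gs by (simp add: field_simps)
  also have "\<dots> = Rmax / ((1 - \<gamma>t) * (1 - \<gamma>s)) * \<Delta>" by (simp add: Mt_def)
  finally have Ele: "E \<le> Rmax / ((1 - \<gamma>t) * (1 - \<gamma>s)) * \<Delta>" .
  have KLb: "KL_div (softmax_policy Qs s) (softmax_policy Qt s) \<le> 2 * E" for s
  proof -
    have "\<bar>Qs s a - Qt s a - (\<gamma>s * cs - \<gamma>t * ct)\<bar> \<le> E" for a
      using ds(1)[of s a] dt(1)[of s a] TT[of s a] unfolding E_def Ts_def Tt_def by simp
    hence "KL_div (\<lambda>a. exp (Qs s a) / (\<Sum>b\<in>UNIV. exp (Qs s b))) (\<lambda>a. exp (Qt s a) / (\<Sum>b\<in>UNIV. exp (Qt s b))) \<le> 2 * E"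
      by (rule KL_bound)
    thus ?thesis by (simp add: softmax_policy_def[abs_def])
  qed
  note dp = disc_props[OF P rho0 softmax_nonneg[of Qs] softmax_sum[of Qs] gs]
  have "(\<Sum>s\<in>UNIV. disc_state_dist \<gamma>s \<rho>0 (softmax_policy Qs) P s
            * KL_div (softmax_policy Qs s) (softmax_policy Qt s))
        \<le> (\<Sum>s\<in>UNIV. disc_state_dist \<gamma>s \<rho>0 (softmax_policy Qs) P s * (2 * E))"
    by (rule sum_mono, rule mult_left_mono) (use KLb dp in auto)
  also have "\<dots> = 2 * E" using dp(2) by (simp flip: sum_distrib_right)
  also have "\<dots> \<le> 2 * (Rmax / ((1 - \<gamma>t) * (1 - \<gamma>s)) * \<Delta>)" using Ele by simp
  also have "\<dots> \<le> 2 * n * Rmax / ((1 - \<gamma>t) * (1 - \<gamma>s)) * \<Delta>"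
  proof -
    have "0 \<le> Rmax / ((1 - \<gamma>t) * (1 - \<gamma>s)) * \<Delta>"
      using R0 gs gt by (simp add: \<Delta>_def)
    hence "1 * (Rmax / ((1 - \<gamma>t) * (1 - \<gamma>s)) * \<Delta>) \<le> n * (Rmax / ((1 - \<gamma>t) * (1 - \<gamma>s)) * \<Delta>)"
      using n1 by (rule mult_right_mono[rotated])
    thus ?thesis by simp
  qed
  finally show ?thesis by (simp add: n_def \<Delta>_def)
qed

end
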